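(* In the setting below, every coding scheme satisfies $\mathcal{L}_{\text{total}}\ge\mathcal{L}_{\text{total,lb}}:=\sum_{i\in\{3,4\}}\sum_{j=2Z+1}^{n}\mu^{(i)}_j$ (an empty sum being $0$).
   Context: Let $n,a,b,Z$ be positive integers with $\max\{a,b\}\le n\le a+b$ and $Z\le n$. Let $x=(x_1,\dots,x_n)^\top$ be a real random vector with $\mathbb{E}[x]=0$ and positive definite covariance $\Psi=\mathbb{E}[xx^\top]$, with Cholesky decomposition $\Psi=LL^\top$ ($L$ lower triangular with positive diagonal). Let $x^{(1)}=(x_1,\dots,x_a)^\top$, $x^{(2)}=(x_{n-b+1},\dots,x_n)^\top$. A coding scheme consists of matrices $E^{(1,3)},E^{(1,5)}\in\mathbb{R}^{Z\times a}$, $E^{(2,4)},E^{(2,5)}\in\mathbb{R}^{Z\times b}$, $E^{(5,6)}\in\mathbb{R}^{Z\times 2Z}$, $D^{(3)},D^{(4)}\in\mathbb{R}^{n\times 2Z}$; set $\phi^{(1,3)}=E^{(1,3)}x^{(1)}$, $\phi^{(1,5)}=E^{(1,5)}x^{(1)}$, $\phi^{(2,4)}=E^{(2,4)}x^{(2)}$, $\phi^{(2,5)}=E^{(2,5)}x^{(2)}$, $\phi^{(5,6)}=E^{(5,6)}\begin{bmatrix}\phi^{(1,5)}\\ \phi^{(2,5)}\end{bmatrix}$, $\hat x^{(3)}=D^{(3)}\begin{bmatrix}\phi^{(1,3)}\\ \phi^{(5,6)}\end{bmatrix}$, $\hat x^{(4)}=D^{(4)}\begin{bmatrix}\phi^{(2,4)}\\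 \phi^{(5,6)}\end{bmatrix}$. For task matrices $K^{(3)}\in\mathbb{R}^{m_3\times n}$, $K^{(4)}\in\mathbb{R}^{m_4\times n}$ the overall task loss is $\mathcal{L}_{\text{total}}=\sum_{i\in\{3,4\}}\mathbb{E}\|K^{(i)}x-K^{(i)}\hat x^{(i)}\|_2^2$. For $i\in\{3,4\}$ let $S^{(i)}=L^\top K^{(i)\top}K^{(i)}L$ with eigenvalues $\mu^{(i)}_1\ge\mu^{(i)}_2\ge\dots\ge\mu^{(i)}_n$. *)

theory Defs
  imports "HOL-Probability.Probability" "Jordan_Normal_Form.Matrix" "Jordan_Normal_Form.Char_Poly"
begin

definition pos_def_mat :: "real mat \<Rightarrow> bool" where
  "pos_def_mat A \<longleftrightarrow> A \<in> carrier_mat (dim_row A) (dim_row A) \<and> A = transpose_mat A \<and>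
     (\<forall>v \<in> carrier_vec (dim_row A). v \<noteq> 0\<^sub>v (dim_row A) \<longrightarrow> v \<bullet> (A *\<^sub>v v) > 0)"

definition lower_tri_pos_diag :: "real mat \<Rightarrow> bool" where
  "lower_tri_pos_diag L \<longleftrightarrow>
     (\<forall>i < dim_row L. \<forall>j < dim_col L. i < j \<longrightarrow> L $$ (i,j) = 0) \<and>
     (\<forall>i < dim_row L. L $$ (i,i) > 0)"

definition eigenvalues_desc :: "real mat \<Rightarrow> real list \<Rightarrow> bool" where
  "eigenvalues_desc S mu \<longleftrightarrow> length mu = dim_row S \<and> sorted_wrt (\<ge>) mu \<and>
     char_poly S = (\<Prod>m\<leftarrow>mu. [:- m, 1:])"

definition first_part :: "nat \<Rightarrow> real vec \<Rightarrow> real vec" where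
  "first_part a v = vec a (\<lambda>i. v $ i)"

definition last_part :: "nat \<Rightarrow> nat \<Rightarrow> real vec \<Rightarrow> real vec" where
  "last_part n b v = vec b (\<lambda>i. v $ (n - b + i))"

definition phi56 :: "real mat \<Rightarrow> real mat \<Rightarrow> real mat \<Rightarrow> real vec \<Rightarrow> real vec \<Rightarrow> real vec" where
  "phi56 E15 E25 E56 x1 x2 = E56 *\<^sub>v ((E15 *\<^sub>v x1) @\<^sub>v (E25 *\<^sub>v x2))"

definition sq_norm_vec :: "real vec \<Rightarrow> real" where
  "sq_norm_vec v = v \<bullet> v"

end

theory Submission
  imports Defs "Jordan_Normal_Form.Schur_Decomposition"
begin

definition tr :: "real mat \<Rightarrow> real" where "tr A = (\<Sum>i<dim_row A. A $$ (i,i))"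

lemma mult_index_sum: "i < dim_row A \<Longrightarrow> j < dim_col B \<Longrightarrow> dim_col A = dim_row B \<Longrightarrow>
  (A * B) $$ (i,j) = (\<Sum>k<dim_row B. A $$ (i,k) * B $$ (k,j))"
  by (auto simp: index_mult_mat scalar_prod_def lessThan_atLeast0 intro!: sum.cong)

lemma tr_comm: assumes "A \<in> carrier_mat m n" "B \<in> carrier_mat n m"
  shows "tr (A * B) = tr (B * A)"
proof -
  have "tr (A * B) = (\<Sum>i<m. \<Sum>k<n. A $$ (i,k) * B $$ (k,i))"
    unfolding tr_def using assms by (auto simp: mult_index_sum simp del: index_mult_mat simp add: index_mult_mat(2,3) intro!: sum.cong)
  also have "\<dots> = (\<Sum>k<n. \<Sum>i<m. B $$ (k,i) * A $$ (i,k))"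
    by (subst sum.swap) (simp add: mult.commute)
  also have "\<dots> = tr (B * A)"
    unfolding tr_def using assms by (auto simp: mult_index_sum simp del: index_mult_mat simp add: index_mult_mat(2,3) intro!: sum.cong)
  finally show ?thesis .
qed

lemma tr_add: "A \<in> carrier_mat n n \<Longrightarrow> B \<in> carrier_mat n n \<Longrightarrow> tr (A + B) = tr A + tr B"
  unfolding tr_def by (auto simp: sum.distrib)

lemma tr_minus: "A \<in> carrier_mat n n \<Longrightarrow> B \<in> carrier_mat n n \<Longrightarrow> tr (A - B) = tr A - tr B"
  unfolding tr_def by (auto simp: sum_subtractf)

lemma tr_smult: "A \<in> carrier_mat n n \<Longrightarrow> tr (c \<cdot>\<^sub>m A) = c * tr A"
  unfolding tr_def by (auto simp: sum_distrib_left intro!: sum.cong)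

lemma tr_one: "tr (1\<^sub>m n) = real n"
  unfolding tr_def by auto

lemma tr_zero: "tr (0\<^sub>m n n) = 0"
  unfolding tr_def by auto

lemma major:
  fixes mu c :: "nat \<Rightarrow> real" and n r :: nat
  assumes mono: "\<And>i j. i \<le> j \<Longrightarrow> j < n \<Longrightarrow> mu j \<le> mu i"
    and nn: "\<And>i. i < n \<Longrightarrow> 0 \<le> mu i"
    and c01: "\<And>i. i < n \<Longrightarrow> 0 \<le> c i \<and> c i \<le> 1"
    and csum: "(\<Sum>i<n. c i) \<le> real r"
  shows "(\<Sum>i=r..<n. mu i) \<le> (\<Sum>i<n. mu i * (1 - c i))"
proof (cases "n \<le> r")
  case True
  then have "(\<Sum>i=r..<n. mu i) = 0" by simp
  moreover have "0 \<le> (\<Sum>i<n. mu i * (1 - c i))"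
    by (rule sum_nonneg) (use nn c01 in auto)
  ultimately show ?thesis by simp
next
  case False
  define t where "t = mu r"
  have split: "{..<n} = {..<r} \<union> {r..<n}" using False by auto
  have disj: "{..<r} \<inter> {r..<n} = {}" by auto
  have cs: "(\<Sum>i<n. c i) = (\<Sum>i<r. c i) + (\<Sum>i=r..<n. c i)"
    by (subst split, rule sum.union_disjoint) (use disj in auto)
  have ms: "(\<Sum>i<n. mu i * (1 - c i)) = (\<Sum>i<r. mu i * (1 - c i)) + (\<Sum>i=r..<n. mu i * (1 - c i))"
    by (subst split, rule sum.union_disjoint) (use disj in auto)
  have t0: "0 \<le> t" using nn False t_def by auto
  have "(\<Sum>i=r..<n. mu i * c i) \<le> (\<Sum>i=r..<n. t * c i)"
    by (rule sum_mono) (use mono c01 t_def in \<open>auto intro!: mult_right_mono\<close>)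
  also have "\<dots> = t * (\<Sum>i=r..<n. c i)" by (simp add: sum_distrib_left)
  also have "\<dots> \<le> t * (\<Sum>i<r. (1 - c i))"
  proof -
    have "(\<Sum>i<r. (1 - c i)) = real r - (\<Sum>i<r. c i)" by (simp add: sum_subtractf)
    then have "(\<Sum>i=r..<n. c i) \<le> (\<Sum>i<r. (1 - c i))" using cs csum by linarith
    then show ?thesis using t0 by (intro mult_left_mono)
  qed
  also have "\<dots> = (\<Sum>i<r. t * (1 - c i))" by (simp add: sum_distrib_left)
  also have "\<dots> \<le> (\<Sum>i<r. mu i * (1 - c i))"
    by (rule sum_mono) (use mono c01 t_def False in \<open>auto intro!: mult_right_mono\<close>)
  finally have "(\<Sum>i=r..<n. mu i * c i) \<le> (\<Sum>i<r. mu i * (1 - c i))" .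
  moreover have "(\<Sum>i=r..<n. mu i * (1 - c i)) = (\<Sum>i=r..<n. mu i) - (\<Sum>i=r..<n. mu i * c i)"
    by (simp add: algebra_simps sum_subtractf)
  ultimately show ?thesis using ms by linarith
qed

definition outer :: "real vec \<Rightarrow> real mat" where
  "outer d = mat (dim_vec d) (dim_vec d) (\<lambda>(i,j). d$i * d$j)"

lemma outer_carrier[simp]: "d \<in> carrier_vec n \<Longrightarrow> outer d \<in> carrier_mat n n"
  unfolding outer_def by auto

lemma mult_outer_left: assumes "M \<in> carrier_mat n n" "d \<in> carrier_vec n"
  shows "M * outer d = mat n n (\<lambda>(i,j). (M *\<^sub>v d)$i * d$j)"
  by (rule eq_matI) (use assms in \<open>auto simp: outer_def scalar_prod_def sum_distrib_right mult.assoc intro!: sum.cong\<close>)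

lemma mult_outer_right: assumes "M \<in> carrier_mat n n" "d \<in> carrier_vec n"
  shows "outer d * M = mat n n (\<lambda>(i,j). d$i * (transpose_mat M *\<^sub>v d)$j)"
  by (rule eq_matI) (use assms in \<open>auto simp: outer_def scalar_prod_def sum_distrib_left mult.assoc mult.left_commute intro!: sum.cong\<close>)

lemma outer_mult_vec: assumes "d \<in> carrier_vec n" "w \<in> carrier_vec n"
  shows "outer d *\<^sub>v w = scalar_prod d w \<cdot>\<^sub>v d"
  by (rule eq_vecI) (use assms in \<open>auto simp: outer_def scalar_prod_def sum_distrib_left mult.assoc mult.commute mult.left_commute intro!: sum.cong\<close>)

lemma outer_outer: assumes "d \<in> carrier_vec n"
  shows "outer d * outer d = scalar_prod d d \<cdot>\<^sub>m outer d"
proof -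
  have "outer d * outer d = mat n n (\<lambda>(i,j). (outer d *\<^sub>v d)$i * d$j)"
    using assms by (intro mult_outer_left) auto
  also have "\<dots> = scalar_prod d d \<cdot>\<^sub>m outer d"
    unfolding outer_mult_vec[OF assms assms] using assms by (intro eq_matI) (auto simp: outer_def)
  finally show ?thesis .
qed

lemma tr_outer: "tr (outer d) = scalar_prod d d"
  unfolding tr_def outer_def scalar_prod_def by (auto simp: power2_eq_square lessThan_atLeast0)

lemma transpose_outer: "transpose_mat (outer d) = outer d"
  unfolding outer_def by (rule eq_matI) auto

lemma transpose_smult: "transpose_mat (c \<cdot>\<^sub>m A) = c \<cdot>\<^sub>m transpose_mat A"
  by (rule eq_matI) auto

lemma smult_smult_m: "a \<cdot>\<^sub>m (b \<cdot>\<^sub>m A) = (a * b) \<cdot>\<^sub>m (A :: real mat)"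
  by (rule eq_matI) auto

lemma smult_mat_vec: "A \<in> carrier_mat nr nc \<Longrightarrow> v \<in> carrier_vec nc \<Longrightarrow> (k \<cdot>\<^sub>m A) *\<^sub>v v = k \<cdot>\<^sub>v (A *\<^sub>v (v :: real vec))"
  by (rule eq_vecI) (auto simp: scalar_prod_def sum_distrib_left mult.assoc intro!: sum.cong)

lemma sprod_self_pos: fixes d :: "real vec" assumes "d \<in> carrier_vec n" "d \<noteq> 0\<^sub>v n"
  shows "scalar_prod d d > 0"
proof -
  obtain i where i: "i < n" "d $ i \<noteq> 0" using assms by (metis carrier_vecD eq_vecI index_zero_vec(1,2))
  have "d$i * d$i \<le> (\<Sum>k\<in>{0..<n}. d$k * d$k)"
    by (rule member_le_sum[of i "{0..<n}" "\<lambda>k. d$k * d$k"]) (use i in auto)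
  moreover have "d$i * d$i > 0" using i(2) by (metis not_real_square_gt_zero)
  ultimately show ?thesis using assms unfolding scalar_prod_def by auto
qed

lemma proj_exists:
  "set vs \<subseteq> carrier_vec n \<Longrightarrow> \<exists>P\<in>carrier_mat n n. transpose_mat P = P \<and> P * P = P \<and>
     (\<forall>v\<in>set vs. P *\<^sub>v v = v) \<and> tr P \<le> real (length vs)"
proof (induction vs)
  case Nil
  show ?case by (intro bexI[of _ "0\<^sub>m n n"]) (auto simp: tr_zero)
next
  case (Cons v vs)
  then obtain P where P: "P \<in> carrier_mat n n" and sym: "transpose_mat P = P" and idem: "P * P = P"
    and fix_: "\<forall>w\<in>set vs. P *\<^sub>v w = w" and trP: "tr P \<le> real (length vs)" by auto
  have v: "v \<in> carrier_vec n" using Cons by auto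
  define d where "d = v - P *\<^sub>v v"
  have d: "d \<in> carrier_vec n" using v P unfolding d_def by auto
  have Pd: "P *\<^sub>v d = 0\<^sub>v n"
  proof -
    have "P *\<^sub>v d = P *\<^sub>v v - P *\<^sub>v (P *\<^sub>v v)" unfolding d_def
      using P v by (auto simp: mult_minus_distrib_mat_vec)
    also have "P *\<^sub>v (P *\<^sub>v v) = P *\<^sub>v v" using P v idem
      by (metis assoc_mult_mat_vec)
    finally show ?thesis using P v by auto
  qed
  have adj: "scalar_prod d (P *\<^sub>v w) = 0" if w: "w \<in> carrier_vec n" for w
  proof -
    have "scalar_prod d (P *\<^sub>v w) = scalar_prod (transpose_mat P *\<^sub>v d) w"
      using transpose_vec_mult_scalar[OF P w d] by simp
    also have "\<dots> = 0" using sym Pd w by auto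
    finally show ?thesis .
  qed
  show ?case
  proof (cases "d = 0\<^sub>v n")
    case True
    then have "P *\<^sub>v v = v" unfolding d_def using P v
      by (metis carrier_vecD eq_vecI index_minus_vec(1) index_zero_vec(1) mult_mat_vec_carrier right_minus_eq)
    then show ?thesis using P sym idem fix_ trP by (intro bexI[of _ P]) auto
  next
    case False
    define c where "c = 1 / scalar_prod d d"
    have dd: "scalar_prod d d > 0" using sprod_self_pos[OF d False] .
    define P' where "P' = P + c \<cdot>\<^sub>m outer d"
    have O: "outer d \<in> carrier_mat n n" using d by auto
    have P': "P' \<in> carrier_mat n n" unfolding P'_def using P O by auto
    have PO: "P * outer d = 0\<^sub>m n n"
      using Pd d P by (auto simp: mult_outer_left intro!: eq_matI)
    have OP: "outer d * P = 0\<^sub>m n n"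
      using Pd d P sym by (auto simp: mult_outer_right intro!: eq_matI)
    have cO: "c \<cdot>\<^sub>m outer d \<in> carrier_mat n n" using O by auto
    have e1: "P * P' = P"
      unfolding P'_def using P cO O by (simp add: mult_add_distrib_mat[OF P P cO] idem mult_smult_distrib[OF P O] PO)
    have cc: "c * (c * scalar_prod d d) = c" using dd c_def by simp
    have "(c \<cdot>\<^sub>m outer d) * P' = (c \<cdot>\<^sub>m outer d) * P + (c \<cdot>\<^sub>m outer d) * (c \<cdot>\<^sub>m outer d)"
      unfolding P'_def by (rule mult_add_distrib_mat[OF cO P cO])
    also have "(c \<cdot>\<^sub>m outer d) * P = 0\<^sub>m n n"
      by (simp add: mult_smult_assoc_mat[OF O P] OP)
    also have "(c \<cdot>\<^sub>m outer d) * (c \<cdot>\<^sub>m outer d) = c \<cdot>\<^sub>m outer d"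
      by (simp add: mult_smult_assoc_mat[OF O cO] mult_smult_distrib[OF O O] outer_outer[OF d] smult_smult_m cc)
    finally have e2: "(c \<cdot>\<^sub>m outer d) * P' = c \<cdot>\<^sub>m outer d" using cO by simp
    have "P' * P' = P * P' + (c \<cdot>\<^sub>m outer d) * P'"
      using add_mult_distrib_mat[OF P cO P'] by (simp only: P'_def)
    then have idem': "P' * P' = P'" using e1 e2 by (simp add: P'_def)
    have sym': "transpose_mat P' = P'" unfolding P'_def
      using P O sym by (simp add: transpose_add transpose_smult transpose_outer)
    have P'v: "P' *\<^sub>v w = P *\<^sub>v w + (c * scalar_prod d w) \<cdot>\<^sub>v d" if w: "w \<in> carrier_vec n" for w
      unfolding P'_def using P O w d
      by (simp add: add_mult_distrib_mat_vec outer_mult_vec[OF d w] smult_mat_vec[OF O w] smult_smult_assoc)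
    have fix1: "P' *\<^sub>v w = w" if w: "w \<in> set vs" for w
    proof -
      have wc: "w \<in> carrier_vec n" using Cons w by auto
      have "scalar_prod d w = 0" using adj[OF wc] fix_ w by auto
      then show ?thesis using P'v[OF wc] fix_ w wc d by auto
    qed
    have fixv: "P' *\<^sub>v v = v"
    proof -
      have vv: "v = d + P *\<^sub>v v" unfolding d_def using P v by auto
      have "scalar_prod d v = scalar_prod d d + scalar_prod d (P *\<^sub>v v)"
        by (subst vv, rule scalar_prod_add_distrib[OF d d]) (use P v in auto)
      then have "scalar_prod d v = scalar_prod d d" using adj[OF v] by simp
      then have "c * scalar_prod d v = 1" using dd c_def by simp
      then have "P' *\<^sub>v v = P *\<^sub>v v + d" using P'v[OF v] by simp
      also have "\<dots> = v" using vv d P v by (metis add.commute comm_add_vec mult_mat_vec_carrier)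
      finally show ?thesis .
    qed
    have "tr P' = tr P + c * scalar_prod d d"
      unfolding P'_def using P O by (simp add: tr_add tr_smult[OF O] tr_outer)
    also have "\<dots> = tr P + 1" using dd c_def by simp
    finally have "tr P' \<le> real (length (v # vs))" using trP by simp
    then show ?thesis using P' sym' idem' fix1 fixv by (intro bexI[of _ P']) auto
  qed
qed

definition diag_of :: "real list \<Rightarrow> real mat" where
  "diag_of es = mat (length es) (length es) (\<lambda>(i,j). if i = j then es!i else 0)"

lemma deg_lin_prod: "degree (\<Prod>e\<leftarrow>es. [:-(e::real),1:]) = length es"
proof (induct es)
  case (Cons e es)
  have nz: "(\<Prod>e\<leftarrow>es. [:-(e::real),1:]) \<noteq> 0" by (auto simp: prod_list_zero_iff)
  have "degree ([:-e,1:] * (\<Prod>e\<leftarrow>es. [:-(e::real),1:])) = degree [:-e,1:] + degree (\<Prod>e\<leftarrow>es. [:-(e::real),1:])"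
    by (rule degree_mult_eq) (use nz in auto)
  then show ?case using Cons by simp
qed simp

lemma conj_real_vec: "conjugate (v :: real vec) = v"
  by (rule eq_vecI) auto

lemma assoc5: assumes "a \<in> carrier_mat n n" "b \<in> carrier_mat n n" "c \<in> carrier_mat n n"
  "d \<in> carrier_mat n n" "e \<in> carrier_mat n n"
  shows "(a * b) * c * (d * e) = a * (b * c * d) * (e :: real mat)"
  using assms by (simp add: assoc_mult_mat[of _ n n _ n _ n] mult_carrier_mat[of _ n n])

lemma spectral:
  assumes "A \<in> carrier_mat n n" "transpose_mat A = A" "char_poly A = (\<Prod>e\<leftarrow>es. [:-e,1:])"
  shows "\<exists>U\<in>carrier_mat n n. transpose_mat U * U = 1\<^sub>m n \<and> transpose_mat U * A * U = diag_of es"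
  using assms
proof (induct es arbitrary: n A)
  case Nil
  from degree_monic_char_poly[OF Nil(1)] Nil(3) have n: "n = 0" by auto
  show ?case using Nil(1) n
    by (intro bexI[of _ "1\<^sub>m 0"]) (auto simp: diag_of_def intro!: eq_matI)
next
  case (Cons e es n A)
  have A: "A \<in> carrier_mat n n" and symA: "transpose_mat A = A" using Cons by auto
  have nlen: "n = Suc (length es)"
    using degree_monic_char_poly[OF A] Cons(4) deg_lin_prod[of "e#es"] by simp
  define n1 where "n1 = length es"
  have n: "n = 1 + n1" using nlen n1_def by simp
  have cp: "char_poly A = [:-e,1:] * (\<Prod>e\<leftarrow>es. [:-e,1:])" using Cons(4) by simp
  have ev: "eigenvalue A e" unfolding eigenvalue_root_char_poly[OF A] cp by simp
  define v where "v = find_eigenvector A e"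
  from find_eigenvector[OF A ev] have "eigenvector A v e" unfolding v_def .
  then have v: "v \<in> carrier_vec n" and v0: "v \<noteq> 0\<^sub>v n" and Av: "A *\<^sub>v v = e \<cdot>\<^sub>v v"
    unfolding eigenvector_def using A by auto
  interpret cof_vec_space n "TYPE(real)" .
  define b where "b = basis_completion v"
  from basis_completion[OF v v0, folded b_def]
  have dist_b: "distinct b" and indep: "\<not> lin_dep (set b)" and bc: "set b \<subseteq> carrier_vec n"
    and hdb: "hd b = v" and len_b: "length b = n" by auto
  from hdb len_b n obtain vs where bv: "b = v # vs" by (cases b, auto)
  define ws where "ws = gram_schmidt n b"
  from gram_schmidt_result[OF bc dist_b indep refl, folded ws_def]
  have wsc: "set ws \<subseteq> carrier_vec n" and orth: "corthogonal ws" and lws: "length ws = n"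
    by (auto simp: len_b)
  from gram_schmidt_hd[OF v, of vs, folded bv] have hdws: "hd ws = v" unfolding ws_def .
  have ws0: "ws ! 0 = v" using hdws lws n by (metis hd_conv_nth list.size(3) zero_neq_one add_is_0)
  have orth': "scalar_prod (ws!i) (ws!j) = 0 \<longleftrightarrow> i \<noteq> j" if "i < n" "j < n" for i j
    using corthogonalD[OF orth, of i j] that lws by (simp add: conj_real_vec)
  define us where "us = map (\<lambda>w. (1 / sqrt (scalar_prod w w)) \<cdot>\<^sub>v w) ws"
  have usc: "us ! i \<in> carrier_vec n" if "i < n" for i
    using wsc that lws unfolding us_def by auto
  have lus: "length us = n" using lws unfolding us_def by simp
  have wsi: "ws ! i \<in> carrier_vec n" if "i < n" for i using wsc that lws by auto
  have ortho: "scalar_prod (us!i) (us!j) = (if i = j then 1 else 0)" if ij: "i < n" "j < n" for i j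
  proof -
    have pos: "scalar_prod (ws!k) (ws!k) > 0" if "k < n" for k
    proof -
      have "scalar_prod (ws!k) (ws!k) \<noteq> 0" using orth' that by auto
      moreover have "scalar_prod (ws!k) (ws!k) \<ge> 0"
        unfolding scalar_prod_def by (auto intro!: sum_nonneg)
      ultimately show ?thesis by auto
    qed
    have "scalar_prod (us!i) (us!j) = (1 / sqrt (scalar_prod (ws!i) (ws!i))) * (1 / sqrt (scalar_prod (ws!j) (ws!j)))
          * scalar_prod (ws!i) (ws!j)"
      unfolding us_def using ij lws wsi[OF ij(1)] wsi[OF ij(2)]
      by (simp add: smult_scalar_prod_distrib[of _ n] scalar_prod_smult_distrib[of _ n])
    then show ?thesis using orth'[OF ij] pos[OF ij(1)]
      by (cases "i = j") (auto simp: real_sqrt_mult[symmetric])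
  qed
  define W where "W = mat_of_cols n us"
  have W: "W \<in> carrier_mat n n" unfolding W_def using lus by auto
  have colW: "col W i = us ! i" if "i < n" for i unfolding W_def using that lus usc
    by (simp add: col_mat_of_cols)
  have WW: "transpose_mat W * W = 1\<^sub>m n"
    by (rule eq_matI) (use W colW ortho in auto)
  have WW': "W * transpose_mat W = 1\<^sub>m n"
    using mat_mult_left_right_inverse[OF _ W WW] W by auto
  define A' where "A' = transpose_mat W * A * W"
  have A': "A' \<in> carrier_mat n n" unfolding A'_def using W A by auto
  have n0: "0 < n" using n by simp
  have col0W: "col W 0 = (1 / sqrt (scalar_prod v v)) \<cdot>\<^sub>v v"
    using colW[OF n0] ws0 lws n0 unfolding us_def by simp
  have AW0: "A *\<^sub>v col W 0 = e \<cdot>\<^sub>v col W 0"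
    unfolding col0W using A v Av by (simp add: mult_mat_vec smult_smult_assoc mult.commute)
  have colA': "col A' 0 = e \<cdot>\<^sub>v unit_vec n 0"
  proof -
    have "col A' 0 = (transpose_mat W * A) *\<^sub>v col W 0"
      unfolding A'_def using W A n0 by (intro col_mult2) auto
    also have "\<dots> = transpose_mat W *\<^sub>v (A *\<^sub>v col W 0)" using W A n0 by (intro assoc_mult_mat_vec) auto
    also have "\<dots> = e \<cdot>\<^sub>v (transpose_mat W *\<^sub>v col W 0)" unfolding AW0 using W
      by (intro mult_mat_vec) auto
    also have "transpose_mat W *\<^sub>v col W 0 = col (transpose_mat W * W) 0"
      using W n0 by (intro col_mult2[symmetric]) auto
    also have "\<dots> = unit_vec n 0" using WW n0 by simp
    finally show ?thesis .
  qed
  have c0: "A' $$ (i, 0) = (if i = 0 then e else 0)" if "i < n" for i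
  proof -
    have "A' $$ (i, 0) = col A' 0 $ i" using A' that n0 by auto
    then show ?thesis unfolding colA' using that by (auto simp: unit_vec_def)
  qed
  have symA': "transpose_mat A' = A'"
  proof -
    have WT: "transpose_mat W \<in> carrier_mat n n" using W by auto
    have "transpose_mat A' = transpose_mat W * transpose_mat (transpose_mat W * A)"
      unfolding A'_def using transpose_mult[of "transpose_mat W * A" n n W n] W A by auto
    also have "transpose_mat (transpose_mat W * A) = transpose_mat A * W"
      using transpose_mult[OF WT A] by simp
    finally show ?thesis unfolding A'_def using W A symA by simp
  qed
  have r0: "A' $$ (0, j) = (if j = 0 then e else 0)" if "j < n" for j
  proof -
    have "A' $$ (0, j) = transpose_mat A' $$ (j, 0)" using A' that n0 by auto
    then show ?thesis using symA' c0[OF that] by simp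
  qed
  define A3 where "A3 = mat n1 n1 (\<lambda>(i,j). A' $$ (Suc i, Suc j))"
  define A1 where "A1 = mat 1 1 (\<lambda>_. e)"
  have A3: "A3 \<in> carrier_mat n1 n1" unfolding A3_def by auto
  have A1: "A1 \<in> carrier_mat 1 1" unfolding A1_def by auto
  have blk: "A' = four_block_mat A1 (0\<^sub>m 1 n1) (0\<^sub>m n1 1) A3"
  proof (rule eq_matI)
    fix i j assume i: "i < dim_row (four_block_mat A1 (0\<^sub>m 1 n1) (0\<^sub>m n1 1) A3)"
      and j: "j < dim_col (four_block_mat A1 (0\<^sub>m 1 n1) (0\<^sub>m n1 1) A3)"
    then have i': "i < n" and j': "j < n" using A1 A3 n by auto
    show "A' $$ (i, j) = four_block_mat A1 (0\<^sub>m 1 n1) (0\<^sub>m n1 1) A3 $$ (i, j)"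
      using i j A1 A3 c0[OF i'] r0[OF j'] i' j'
      by (cases i; cases j) (auto simp: A1_def A3_def)
  qed (use A' A1 A3 n in auto)
  have "similar_mat_wit A' A (transpose_mat W) W"
    unfolding similar_mat_wit_def Let_def using A' A W WW WW' by (auto simp: A'_def)
  then have "similar_mat A' A" unfolding similar_mat_def by blast
  from char_poly_similar[OF this] cp
  have "char_poly A' = [: -e,1 :] * (\<Prod> e \<leftarrow> es. [:- e, 1:])" by simp
  also have "char_poly A' = char_poly A1 * char_poly A3"
    unfolding blk by (rule char_poly_four_block_zeros_col[OF A1 _ A3]) auto
  also have "char_poly A1 = [: -e,1 :]"
    by (simp add: A1_def char_poly_defs det_def sign_def)
  finally have cp3: "char_poly A3 = (\<Prod> e \<leftarrow> es. [:- e, 1:])"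
    by (metis mult_cancel_left pCons_eq_0_iff zero_neq_one)
  have symA3: "transpose_mat A3 = A3"
  proof (rule eq_matI)
    fix i j assume "i < dim_row A3" "j < dim_col A3"
    then have "i < n1" "j < n1" using A3 by auto
    moreover have "A' $$ (Suc j, Suc i) = A' $$ (Suc i, Suc j)"
      using symA' calculation n A' by (metis add_Suc_shift index_transpose_mat(1) carrier_matD plus_1_eq_Suc Suc_less_eq)
    ultimately show "transpose_mat A3 $$ (i, j) = A3 $$ (i, j)" unfolding A3_def by auto
  qed (use A3 in auto)
  from Cons(1)[OF A3 symA3 cp3] obtain U3 where U3: "U3 \<in> carrier_mat n1 n1"
    and U3U3: "transpose_mat U3 * U3 = 1\<^sub>m n1" and U3A: "transpose_mat U3 * A3 * U3 = diag_of es" by auto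
  define F where "F = four_block_mat (1\<^sub>m 1) (0\<^sub>m 1 n1) (0\<^sub>m n1 1) U3"
  have F: "F \<in> carrier_mat n n" unfolding F_def using U3 n by auto
  have FT: "transpose_mat F = four_block_mat (1\<^sub>m 1) (0\<^sub>m 1 n1) (0\<^sub>m n1 1) (transpose_mat U3)"
    unfolding F_def using U3 by (subst transpose_four_block_mat) auto
  have FF: "transpose_mat F * F = 1\<^sub>m n"
  proof -
    have "transpose_mat F * F = four_block_mat (1\<^sub>m 1) (0\<^sub>m 1 n1) (0\<^sub>m n1 1) (transpose_mat U3 * U3)"
      unfolding FT unfolding F_def using U3 by (subst mult_four_block_mat[of _ 1 1 _ n1 _ n1 _ _ 1 _ n1]) auto
    also have "\<dots> = 1\<^sub>m n" unfolding U3U3 n by (rule eq_matI) auto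
    finally show ?thesis .
  qed
  define U where "U = W * F"
  have WTc: "transpose_mat W \<in> carrier_mat n n" and FTc: "transpose_mat F \<in> carrier_mat n n"
    using W F by auto
  have U: "U \<in> carrier_mat n n" unfolding U_def using W F by auto
  have UU: "transpose_mat U * U = 1\<^sub>m n"
  proof -
    have "transpose_mat U * U = (transpose_mat F * transpose_mat W) * (W * F)"
      unfolding U_def transpose_mult[OF W F] ..
    also have "\<dots> = transpose_mat F * (transpose_mat W * (W * F))"
      using W F by (rule_tac assoc_mult_mat[OF FTc WTc]) auto
    also have "\<dots> = transpose_mat F * ((transpose_mat W * W) * F)"
      by (simp only: assoc_mult_mat[OF WTc W F])
    also have "\<dots> = transpose_mat F * F" unfolding WW using F by simp
    finally show ?thesis using FF by simp
  qed
  have "transpose_mat U * A * U = transpose_mat F * A' * F"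
    unfolding U_def A'_def transpose_mult[OF W F] by (rule assoc5[OF FTc WTc A W F])
  also have "\<dots> = four_block_mat A1 (0\<^sub>m 1 n1) (0\<^sub>m n1 1) (transpose_mat U3 * A3 * U3)"
  proof -
    have "transpose_mat F * A' = four_block_mat A1 (0\<^sub>m 1 n1) (0\<^sub>m n1 1) (transpose_mat U3 * A3)"
      unfolding FT blk using U3 A1 A3 by (subst mult_four_block_mat[of _ 1 1 _ n1 _ n1 _ _ 1 _ n1]) auto
    then show ?thesis unfolding F_def using U3 A1 A3
      by (simp add: mult_four_block_mat[of _ 1 1 _ n1 _ n1 _ _ 1 _ n1])
  qed
  also have "\<dots> = diag_of (e # es)"
    unfolding U3A by (rule eq_matI) (auto simp: diag_of_def A1_def n1_def nth_Cons split: nat.splits)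
  finally show ?case using U UU by blast
qed

lemma tr_gram: "M \<in> carrier_mat m n \<Longrightarrow> tr (M * transpose_mat M) = (\<Sum>i<m. \<Sum>j<n. (M$$(i,j))^2)"
  unfolding tr_def by (auto simp: scalar_prod_def power2_eq_square lessThan_atLeast0 intro!: sum.cong)

lemma tr_gram_nonneg: "M \<in> carrier_mat m n \<Longrightarrow> tr (M * transpose_mat M) \<ge> 0"
  by (simp add: tr_gram sum_nonneg)

lemma sum_list_drop: "sum_list (drop r xs) = (\<Sum>i=r..<length xs. (xs ! i :: real))"
proof -
  have "sum_list (drop r xs) = (\<Sum>i=0..<length xs - r. xs ! (r + i))"
    by (simp add: sum_list_sum_nth)
  also have "\<dots> = (\<Sum>i=r..<length xs. xs ! i)"
  proof (cases "r \<le> length xs")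
    case True
    show ?thesis
      by (rule sum.reindex_bij_witness[of _ "\<lambda>i. i - r" "\<lambda>i. r + i"]) (use True in auto)
  qed simp
  finally show ?thesis .
qed

lemma diag_entry: assumes "D = diag_of mu" "M \<in> carrier_mat (length mu) (length mu)" "i < length mu"
  shows "(D * M) $$ (i,i) = mu ! i * M $$ (i,i)"
proof -
  have "(D * M) $$ (i,i) = (\<Sum>k<length mu. D $$ (i,k) * M $$ (k,i))"
    using assms by (subst mult_index_sum) (auto simp: diag_of_def)
  also have "\<dots> = (\<Sum>k\<in>{i}. D $$ (i,k) * M $$ (k,i))"
    by (rule sum.mono_neutral_right) (use assms in \<open>auto simp: diag_of_def\<close>)
  finally show ?thesis using assms by (simp add: diag_of_def)
qed

lemma idem_diag: fixes P :: "real mat" assumes P: "P \<in> carrier_mat n n" and sym: "transpose_mat P = P" and idem: "P * P = P"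
  and i: "i < n" shows "0 \<le> P $$ (i,i) \<and> P $$ (i,i) \<le> 1"
proof -
  have "P $$ (i,i) = (P * P) $$ (i,i)" using idem by simp
  also have "\<dots> = (\<Sum>k<n. P $$ (i,k) * P $$ (k,i))" using P i by (subst mult_index_sum) auto
  also have "\<dots> = (\<Sum>k<n. (P $$ (i,k))^2)"
  proof (rule sum.cong)
    fix k assume "k \<in> {..<n}"
    then have "P $$ (k,i) = P $$ (i,k)" using sym P i
      by (metis carrier_matD(1,2) index_transpose_mat(1) lessThan_iff)
    then show "P $$ (i,k) * P $$ (k,i) = (P $$ (i,k))^2" by (simp add: power2_eq_square)
  qed simp
  finally have e: "P $$ (i,i) = (\<Sum>k<n. (P $$ (i,k))^2)" .
  have "(P $$ (i,i))^2 \<le> (\<Sum>k<n. (P $$ (i,k))^2)"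
    by (rule member_le_sum[of i "{..<n}" "\<lambda>k. (P $$ (i,k))^2"]) (use i in auto)
  then have "(P $$ (i,i))^2 \<le> P $$ (i,i)" using e by simp
  moreover have "0 \<le> P $$ (i,i)" using e by (simp add: sum_nonneg)
  moreover have "P $$ (i,i) \<le> 1"
  proof (rule ccontr)
    assume "\<not> P $$ (i,i) \<le> 1"
    then have "P $$ (i,i) * 1 < P $$ (i,i) * P $$ (i,i)"
      by (intro mult_strict_left_mono) auto
    then show False using calculation(1) by (simp add: power2_eq_square)
  qed
  ultimately show ?thesis by simp
qed

lemma gram_diag_nonneg: "M \<in> carrier_mat m n \<Longrightarrow> i < n \<Longrightarrow> (transpose_mat M * (M :: real mat)) $$ (i,i) \<ge> 0"
  by (auto simp: scalar_prod_def intro!: sum_nonneg)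

lemma eckart:
  fixes B R Q :: "real mat"
  assumes B: "B \<in> carrier_mat m n" and R: "R \<in> carrier_mat m r" and Q: "Q \<in> carrier_mat r n"
    and ev: "eigenvalues_desc (transpose_mat B * B) mu"
  shows "sum_list (drop r mu) \<le> tr ((B - R * Q) * transpose_mat (B - R * Q))"
proof -
  note nn = assoc_mult_mat[of _ n n _ n _ n] mult_carrier_mat[of _ n n]
  define Bt where "Bt = transpose_mat B"
  have Bt: "Bt \<in> carrier_mat n m" unfolding Bt_def using B by auto
  define S where "S = Bt * B"
  have S: "S \<in> carrier_mat n n" unfolding S_def using B Bt by auto
  have symS: "transpose_mat S = S" unfolding S_def Bt_def using transpose_mult[OF Bt[unfolded Bt_def] B] by simp
  from ev have lmu: "length mu = n" and srt: "sorted_wrt (\<ge>) mu"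
    and cpS: "char_poly S = (\<Prod>m\<leftarrow>mu. [:- m, 1:])"
    unfolding eigenvalues_desc_def S_def Bt_def using B by auto
  from spectral[OF S symS cpS] obtain U where U: "U \<in> carrier_mat n n"
    and UU0: "transpose_mat U * U = 1\<^sub>m n" and UD0: "transpose_mat U * S * U = diag_of mu" by auto
  define Ut where "Ut = transpose_mat U"
  define D where "D = diag_of mu"
  have Ut: "Ut \<in> carrier_mat n n" unfolding Ut_def using U by auto
  have D: "D \<in> carrier_mat n n" unfolding D_def diag_of_def using lmu by auto
  have UU: "Ut * U = 1\<^sub>m n" using UU0 unfolding Ut_def .
  have UU': "U * Ut = 1\<^sub>m n" using mat_mult_left_right_inverse[OF Ut U UU] .
  have UD: "Ut * S * U = D" using UD0 unfolding Ut_def D_def .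
  have SU: "S = U * D * Ut"
  proof -
    have "U * D * Ut = (U * Ut) * S * (U * Ut)" unfolding UD[symmetric] using U Ut S by (simp add: assoc_mult_mat[of _ n n _ n _ n] mult_carrier_mat[of _ n n])
    then show ?thesis using UU' S by (simp add: nn)
  qed
  have rc: "set (rows Q) \<subseteq> carrier_vec n" using Q by (auto simp: rows_def row_def carrier_vecI)
  obtain Pi where Pi: "Pi \<in> carrier_mat n n" and symPi: "transpose_mat Pi = Pi" and idemPi: "Pi * Pi = Pi"
    and fixPi: "\<forall>v\<in>set (rows Q). Pi *\<^sub>v v = v" and trPi: "tr Pi \<le> real (length (rows Q))"
    using proj_exists[OF rc] by blast
  have trPi': "tr Pi \<le> real r" using trPi Q by (simp add: nn)
  have QPi: "Q * Pi = Q"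
  proof (rule eq_matI)
    fix k j assume k: "k < dim_row Q" and j: "j < dim_col Q"
    have kr: "k < r" and jn: "j < n" using k j Q by auto
    have rk: "Pi *\<^sub>v row Q k = row Q k" using fixPi kr Q by (auto simp: rows_def)
    have "col Pi j = row Pi j" using row_transpose[of j Pi] symPi jn Pi by (simp add: nn)
    then have "(Q * Pi) $$ (k,j) = scalar_prod (row Pi j) (row Q k)"
      using k j Q Pi jn by (auto simp: comm_scalar_prod[of _ n])
    also have "\<dots> = (Pi *\<^sub>v row Q k) $ j" using Pi jn by (simp add: nn)
    also have "\<dots> = Q $$ (k,j)" using rk jn k Q by simp
    finally show "(Q * Pi) $$ (k,j) = Q $$ (k,j)" .
  qed (use Q Pi in auto)
  define M where "M = 1\<^sub>m n - Pi"
  have M: "M \<in> carrier_mat n n" unfolding M_def using Pi by auto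
  have symM: "transpose_mat M = M" unfolding M_def using transpose_minus[of "1\<^sub>m n" n n Pi] Pi symPi by (simp add: nn)
  have PiM: "Pi * M = 0\<^sub>m n n"
  proof -
    have "Pi * M = Pi * 1\<^sub>m n - Pi * Pi" unfolding M_def by (rule mult_minus_distrib_mat[OF Pi one_carrier_mat Pi])
    then show ?thesis using Pi idemPi by (auto intro!: eq_matI)
  qed
  have QM: "Q * M = 0\<^sub>m r n"
  proof -
    have "Q * M = Q * 1\<^sub>m n - Q * Pi" unfolding M_def by (rule mult_minus_distrib_mat[OF Q one_carrier_mat Pi])
    then show ?thesis using Q QPi by (auto intro!: eq_matI)
  qed
  have idemM: "M * M = M"
  proof -
    have "M * M = 1\<^sub>m n * M - Pi * M" unfolding M_def by (rule minus_mult_distrib_mat[OF one_carrier_mat Pi M[unfolded M_def]])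
    then show ?thesis using M PiM by (auto intro!: eq_matI)
  qed
  define Z where "Z = B * M"
  define Y where "Y = B * Pi - R * Q"
  have Z: "Z \<in> carrier_mat m n" unfolding Z_def using B M by auto
  have Y: "Y \<in> carrier_mat m n" unfolding Y_def using B Pi R Q by auto
  have XZY: "B - R * Q = Z + Y"
  proof -
    have "Z = B * 1\<^sub>m n - B * Pi" unfolding Z_def M_def by (rule mult_minus_distrib_mat[OF B one_carrier_mat Pi])
    then show ?thesis unfolding Y_def using B Pi R Q by (auto intro!: eq_matI)
  qed
  have YM: "Y * M = 0\<^sub>m m n"
  proof -
    have "Y * M = B * Pi * M - R * Q * M" unfolding Y_def by (rule minus_mult_distrib_mat[OF mult_carrier_mat[OF B Pi] mult_carrier_mat[OF R Q] M])
    also have "\<dots> = B * (Pi * M) - R * (Q * M)" using B Pi R Q M by (simp add: nn)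
    also have "\<dots> = 0\<^sub>m m n" unfolding PiM QM using B R by (auto intro!: eq_matI)
    finally show ?thesis .
  qed
  define Yt where "Yt = transpose_mat Y"
  define Zt where "Zt = transpose_mat Z"
  have Yt: "Yt \<in> carrier_mat n m" unfolding Yt_def using Y by auto
  have Zt: "Zt \<in> carrier_mat n m" unfolding Zt_def using Z by auto
  have MYt: "M * Yt = 0\<^sub>m n m"
  proof -
    have "M * Yt = transpose_mat (Y * M)" unfolding Yt_def using transpose_mult[OF Y M] symM by simp
    then show ?thesis using YM by simp
  qed
  have ZYt: "Z * Yt = 0\<^sub>m m m"
  proof -
    have "Z * Yt = B * (M * Yt)" unfolding Z_def using B M Yt by simp
    then show ?thesis unfolding MYt using B by (auto intro!: eq_matI)
  qed
  have YZt: "Y * Zt = 0\<^sub>m m m"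
  proof -
    have "Y * Zt = transpose_mat (Z * Yt)" unfolding Zt_def Yt_def using transpose_mult[OF Z Yt[unfolded Yt_def]] by simp
    then show ?thesis using ZYt by simp
  qed
  have "(B - R * Q) * transpose_mat (B - R * Q) = (Z + Y) * (Zt + Yt)"
    unfolding XZY Zt_def Yt_def using Z Y by (simp add: transpose_add)
  also have "\<dots> = (Z * Zt + Z * Yt) + (Y * Zt + Y * Yt)"
    using add_mult_distrib_mat[OF Z Y add_carrier_mat[OF Yt]] mult_add_distrib_mat[OF Z Zt Yt]
      mult_add_distrib_mat[OF Y Zt Yt] by simp
  also have "\<dots> = Z * Zt + Y * Yt" unfolding ZYt YZt using Z Y Zt Yt by (auto intro!: eq_matI)
  finally have trX: "tr ((B - R * Q) * transpose_mat (B - R * Q)) = tr (Z * Zt) + tr (Y * Yt)"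
    using Z Y Zt Yt by (simp add: tr_add[of _ m])
  have trY: "tr (Y * Yt) \<ge> 0" unfolding Yt_def using tr_gram_nonneg[OF Y] .
  have trZ: "tr (Z * Zt) = tr (M * S)"
  proof -
    have "Zt = M * Bt" unfolding Zt_def Z_def Bt_def using transpose_mult[OF B M] symM by simp
    then have "Z * Zt = B * M * (M * Bt)" unfolding Z_def by simp
    also have "\<dots> = B * (M * (M * Bt))" using assoc_mult_mat[OF B M mult_carrier_mat[OF M Bt]] .
    also have "M * (M * Bt) = (M * M) * Bt" using assoc_mult_mat[OF M M Bt] by simp
    finally have "Z * Zt = B * (M * Bt)" unfolding idemM .
    then have "tr (Z * Zt) = tr ((M * Bt) * B)" using tr_comm[of B m n "M * Bt"] B M Bt by simp
    then show ?thesis unfolding S_def using M Bt B by simp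
  qed
  define P where "P = Ut * Pi * U"
  have P: "P \<in> carrier_mat n n" unfolding P_def using Ut Pi U by auto
  have trMS: "tr (M * S) = (\<Sum>i<n. mu ! i * (1 - P $$ (i,i)))"
  proof -
    have "tr (M * S) = tr (S * M)" using tr_comm[OF M S] .
    also have "S * M = U * (D * Ut * M)" unfolding SU using U D Ut M by (simp add: nn)
    also have "tr \<dots> = tr ((D * Ut * M) * U)" using tr_comm[of U n n "D * Ut * M"] U D Ut M by (simp add: nn)
    also have "(D * Ut * M) * U = D * (Ut * M * U)" using U D Ut M by (simp add: nn)
    also have "Ut * M * U = 1\<^sub>m n - P"
    proof -
      have "Ut * M * U = Ut * (M * U)" using Ut M U by (simp add: nn)
      also have "M * U = U - Pi * U" unfolding M_def using minus_mult_distrib_mat[OF one_carrier_mat Pi U] U by (simp add: nn)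
      also have "Ut * (U - Pi * U) = Ut * U - Ut * (Pi * U)" by (rule mult_minus_distrib_mat[OF Ut U mult_carrier_mat[OF Pi U]])
      finally show ?thesis unfolding UU P_def using Ut Pi U by (simp add: nn)
    qed
    also have "tr (D * (1\<^sub>m n - P)) = (\<Sum>i<n. mu ! i * (1 - P $$ (i,i)))"
    proof -
      have e: "(D * (1\<^sub>m n - P)) $$ (i,i) = mu ! i * (1 - P $$ (i,i))" if "i < n" for i
      proof -
        have mc: "1\<^sub>m n - P \<in> carrier_mat (length mu) (length mu)" using P lmu by auto
        show ?thesis using diag_entry[OF D_def mc] that lmu P by simp
      qed
      show ?thesis unfolding tr_def using D e by simp
    qed
    finally show ?thesis .
  qed
  have symP: "transpose_mat P = P"
  proof -
    have "transpose_mat P = transpose_mat (Pi * U) * transpose_mat Ut"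
      unfolding P_def using transpose_mult[of Ut n n "Pi * U" n] Ut Pi U by (simp add: nn)
    also have "\<dots> = Ut * Pi * U" unfolding Ut_def using transpose_mult[OF Pi U] symPi U Pi by (simp add: nn)
    finally show ?thesis unfolding P_def .
  qed
  have idemP: "P * P = P"
  proof -
    have "P * P = Ut * Pi * (U * Ut) * Pi * U" unfolding P_def using Ut Pi U by (simp add: nn)
    also have "\<dots> = Ut * (Pi * Pi) * U" unfolding UU' using Ut Pi U by (simp add: nn)
    finally show ?thesis unfolding idemPi P_def .
  qed
  have trP: "tr P \<le> real r"
  proof -
    have "tr P = tr (Ut * (Pi * U))" unfolding P_def using Ut Pi U by (simp add: nn)
    also have "\<dots> = tr ((Pi * U) * Ut)" using tr_comm[of Ut n n "Pi * U"] Ut Pi U by (simp add: nn)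
    also have "\<dots> = tr Pi" using Pi U Ut UU' by (simp add: nn)
    finally show ?thesis using trPi' by (simp add: nn)
  qed
  have mu_nn: "0 \<le> mu ! i" if "i < n" for i
  proof -
    have tBU: "transpose_mat (B * U) = Ut * Bt" using transpose_mult[OF B U] unfolding Ut_def Bt_def .
    have "(Ut * Bt) * (B * U) = Ut * (Bt * (B * U))" using assoc_mult_mat[OF Ut Bt mult_carrier_mat[OF B U]] .
    also have "Bt * (B * U) = (Bt * B) * U" using assoc_mult_mat[OF Bt B U] by simp
    also have "Ut * ((Bt * B) * U) = Ut * (Bt * B) * U" using assoc_mult_mat[OF Ut S[unfolded S_def] U] by simp
    finally have "D = transpose_mat (B * U) * (B * U)" unfolding tBU UD[symmetric] S_def by simp
    then have "D $$ (i,i) \<ge> 0" using gram_diag_nonneg[of "B * U" m n i] B U that by (simp add: nn)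
    then show ?thesis unfolding D_def diag_of_def using that lmu by simp
  qed
  have mono: "mu ! j \<le> mu ! i" if "i \<le> j" "j < n" for i j
  proof (cases "i = j")
    case False
    then show ?thesis using srt that lmu by (auto simp: sorted_wrt_iff_nth_less)
  qed simp
  have c01: "0 \<le> P $$ (i,i) \<and> P $$ (i,i) \<le> 1" if "i < n" for i
    using idem_diag[OF P symP idemP that] .
  have csum: "(\<Sum>i<n. P $$ (i,i)) \<le> real r" using trP P unfolding tr_def by simp
  have "sum_list (drop r mu) = (\<Sum>i=r..<n. mu ! i)" using sum_list_drop[of r mu] lmu by simp
  also have "\<dots> \<le> (\<Sum>i<n. mu ! i * (1 - P $$ (i,i)))"
    by (rule major[of n "\<lambda>i. mu ! i" "\<lambda>i. P $$ (i,i)" r]) (use mono mu_nn c01 csum in auto)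
  finally show ?thesis using trX trY trZ trMS by linarith
qed

lemma exp_quad:
  fixes M :: "'w measure" and x :: "'w \<Rightarrow> real vec" and G :: "real mat"
  assumes x_dim: "\<And>\<omega>. \<omega> \<in> space M \<Longrightarrow> x \<omega> \<in> carrier_vec n"
    and x_int: "\<And>i j. i < n \<Longrightarrow> j < n \<Longrightarrow> integrable M (\<lambda>\<omega>. vec_index (x \<omega>) i * vec_index (x \<omega>) j)"
    and G: "G \<in> carrier_mat m n"
  shows "integral\<^sup>L M (\<lambda>\<omega>. sq_norm_vec (G *\<^sub>v x \<omega>)) =
    (\<Sum>k<m. \<Sum>i<n. \<Sum>j<n. G$$(k,i) * G$$(k,j) * integral\<^sup>L M (\<lambda>\<omega>. vec_index (x \<omega>) i * vec_index (x \<omega>) j))"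
proof -
  have pt: "sq_norm_vec (G *\<^sub>v x \<omega>) = (\<Sum>k<m. \<Sum>i<n. \<Sum>j<n. G$$(k,i) * G$$(k,j) * (vec_index (x \<omega>) i * vec_index (x \<omega>) j))"
    if "\<omega> \<in> space M" for \<omega>
  proof -
    have xw: "x \<omega> \<in> carrier_vec n" using x_dim that .
    have "sq_norm_vec (G *\<^sub>v x \<omega>) = (\<Sum>k<m. vec_index (G *\<^sub>v x \<omega>) k * vec_index (G *\<^sub>v x \<omega>) k)"
      unfolding sq_norm_vec_def scalar_prod_def using G by (simp add: lessThan_atLeast0)
    also have "\<dots> = (\<Sum>k<m. (\<Sum>i<n. G$$(k,i) * vec_index (x \<omega>) i) * (\<Sum>j<n. G$$(k,j) * vec_index (x \<omega>) j))"
      using G xw by (auto simp: scalar_prod_def lessThan_atLeast0 intro!: sum.cong)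
    also have "\<dots> = (\<Sum>k<m. \<Sum>i<n. \<Sum>j<n. G$$(k,i) * G$$(k,j) * (vec_index (x \<omega>) i * vec_index (x \<omega>) j))"
      unfolding sum_product by (intro sum.cong refl) (simp add: mult_ac)
    finally show ?thesis .
  qed
  have "integral\<^sup>L M (\<lambda>\<omega>. sq_norm_vec (G *\<^sub>v x \<omega>)) =
        integral\<^sup>L M (\<lambda>\<omega>. \<Sum>k<m. \<Sum>i<n. \<Sum>j<n. G$$(k,i) * G$$(k,j) * (vec_index (x \<omega>) i * vec_index (x \<omega>) j))"
    by (rule Bochner_Integration.integral_cong) (use pt in auto)
  also have "\<dots> = (\<Sum>k<m. \<Sum>i<n. \<Sum>j<n. G$$(k,i) * G$$(k,j) * integral\<^sup>L M (\<lambda>\<omega>. vec_index (x \<omega>) i * vec_index (x \<omega>) j))"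
  proof -
    have I: "\<And>i j. i \<in> {..<n} \<Longrightarrow> j \<in> {..<n} \<Longrightarrow> integrable M (\<lambda>\<omega>. vec_index (x \<omega>) i * vec_index (x \<omega>) j)"
      using x_int by auto
    have s3: "integral\<^sup>L M (\<lambda>\<omega>. \<Sum>j<n. c j * (vec_index (x \<omega>) i * vec_index (x \<omega>) j)) =
       (\<Sum>j<n. c j * integral\<^sup>L M (\<lambda>\<omega>. vec_index (x \<omega>) i * vec_index (x \<omega>) j))" if "i \<in> {..<n}" for i and c :: "nat \<Rightarrow> real"
      by (subst Bochner_Integration.integral_sum) (use I that in auto)
    have s2: "integral\<^sup>L M (\<lambda>\<omega>. \<Sum>i<n. \<Sum>j<n. c i j * (vec_index (x \<omega>) i * vec_index (x \<omega>) j)) =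
       (\<Sum>i<n. \<Sum>j<n. c i j * integral\<^sup>L M (\<lambda>\<omega>. vec_index (x \<omega>) i * vec_index (x \<omega>) j))" for c :: "nat \<Rightarrow> nat \<Rightarrow> real"
      by (subst Bochner_Integration.integral_sum) (use I s3 in auto)
    show ?thesis
      by (subst Bochner_Integration.integral_sum) (auto intro!: integrable_sum integrable_mult_right I simp: s2)
  qed
  finally show ?thesis .
qed

lemma tr_quad: assumes G: "G \<in> carrier_mat m n" and Ps: "Ps \<in> carrier_mat n n"
  shows "tr (G * Ps * transpose_mat G) = (\<Sum>k<m. \<Sum>i<n. \<Sum>j<n. G$$(k,i) * G$$(k,j) * Ps$$(i,j))"
proof -
  have e: "(G * Ps * transpose_mat G) $$ (k,k) = (\<Sum>i<n. \<Sum>j<n. G$$(k,i) * G$$(k,j) * Ps$$(i,j))"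
    if k: "k < m" for k
  proof -
    have "(G * Ps * transpose_mat G) $$ (k,k) = (\<Sum>j<n. (G * Ps) $$ (k,j) * transpose_mat G $$ (j,k))"
      using G Ps k by (subst mult_index_sum) auto
    also have "\<dots> = (\<Sum>j<n. (\<Sum>i<n. G $$ (k,i) * Ps $$ (i,j)) * G $$ (k,j))"
      using G Ps k by (intro sum.cong refl) (subst mult_index_sum, auto)
    also have "\<dots> = (\<Sum>j<n. \<Sum>i<n. G$$(k,i) * G$$(k,j) * Ps$$(i,j))"
      by (simp add: sum_distrib_left sum_distrib_right mult_ac)
    also have "\<dots> = (\<Sum>i<n. \<Sum>j<n. G$$(k,i) * G$$(k,j) * Ps$$(i,j))"
      by (rule sum.swap)
    finally show ?thesis .
  qed
  show ?thesis unfolding tr_def using G Ps e by simp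
qed

lemma task_bound:
  fixes M :: "'w measure" and x :: "'w \<Rightarrow> real vec" and K D C L Psi :: "real mat"
  assumes x_dim: "\<And>\<omega>. \<omega> \<in> space M \<Longrightarrow> x \<omega> \<in> carrier_vec n"
    and x_int: "\<And>i j. i < n \<Longrightarrow> j < n \<Longrightarrow> integrable M (\<lambda>\<omega>. vec_index (x \<omega>) i * vec_index (x \<omega>) j)"
    and Psi: "Psi \<in> carrier_mat n n"
    and cov: "\<And>i j. i < n \<Longrightarrow> j < n \<Longrightarrow> Psi $$ (i,j) = integral\<^sup>L M (\<lambda>\<omega>. vec_index (x \<omega>) i * vec_index (x \<omega>) j)"
    and L: "L \<in> carrier_mat n n" and PsiL: "Psi = L * transpose_mat L"
    and K: "K \<in> carrier_mat mk n" and D: "D \<in> carrier_mat n r" and C: "C \<in> carrier_mat r n"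
    and mu: "eigenvalues_desc (transpose_mat L * transpose_mat K * K * L) mu"
    and y: "\<And>\<omega>. \<omega> \<in> space M \<Longrightarrow> y \<omega> = C *\<^sub>v x \<omega>"
  shows "sum_list (drop r mu) \<le> integral\<^sup>L M (\<lambda>\<omega>. sq_norm_vec (K *\<^sub>v x \<omega> - K *\<^sub>v (D *\<^sub>v y \<omega>)))"
proof -
  define G where "G = K - (K * D) * C"
  have KD: "K * D \<in> carrier_mat mk r" using K D by auto
  have G: "G \<in> carrier_mat mk n" unfolding G_def by (rule minus_carrier_mat[OF mult_carrier_mat[OF KD C]])
  have pw: "K *\<^sub>v x \<omega> - K *\<^sub>v (D *\<^sub>v y \<omega>) = G *\<^sub>v x \<omega>" if w: "\<omega> \<in> space M" for \<omega>
  proof -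
    have xw: "x \<omega> \<in> carrier_vec n" using x_dim w .
    have "G *\<^sub>v x \<omega> = K *\<^sub>v x \<omega> - ((K * D) * C) *\<^sub>v x \<omega>"
      unfolding G_def using minus_mult_distrib_mat_vec[OF K mult_carrier_mat[OF KD C] xw] .
    also have "((K * D) * C) *\<^sub>v x \<omega> = (K * D) *\<^sub>v (C *\<^sub>v x \<omega>)" using KD C xw by simp
    also have "\<dots> = K *\<^sub>v (D *\<^sub>v (C *\<^sub>v x \<omega>))" using K D C xw by simp
    finally show ?thesis using y[OF w] by simp
  qed
  have "integral\<^sup>L M (\<lambda>\<omega>. sq_norm_vec (K *\<^sub>v x \<omega> - K *\<^sub>v (D *\<^sub>v y \<omega>))) =
        integral\<^sup>L M (\<lambda>\<omega>. sq_norm_vec (G *\<^sub>v x \<omega>))"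
    by (rule Bochner_Integration.integral_cong) (use pw in auto)
  also have "\<dots> = (\<Sum>k<mk. \<Sum>i<n. \<Sum>j<n. G$$(k,i) * G$$(k,j) * Psi $$ (i,j))"
    using exp_quad[OF x_dim x_int G] cov by simp
  also have "\<dots> = tr (G * Psi * transpose_mat G)" using tr_quad[OF G Psi] by simp
  also have "G * Psi * transpose_mat G = (G * L) * transpose_mat (G * L)"
  proof -
    have Lt: "transpose_mat L \<in> carrier_mat n n" using L by auto
    have Gt: "transpose_mat G \<in> carrier_mat n mk" using G by auto
    have "(G * L) * transpose_mat (G * L) = (G * L) * (transpose_mat L * transpose_mat G)"
      using transpose_mult[OF G L] by simp
    also have "\<dots> = G * (L * (transpose_mat L * transpose_mat G))"
      using assoc_mult_mat[OF G L mult_carrier_mat[OF Lt Gt]] .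
    also have "L * (transpose_mat L * transpose_mat G) = Psi * transpose_mat G"
      unfolding PsiL using assoc_mult_mat[OF L Lt Gt] by simp
    also have "G * (Psi * transpose_mat G) = G * Psi * transpose_mat G"
      using assoc_mult_mat[OF G Psi Gt] by simp
    finally show ?thesis by simp
  qed
  also have "G * L = K * L - (K * D) * (C * L)"
  proof -
    have "G * L = K * L - ((K * D) * C) * L"
      unfolding G_def using minus_mult_distrib_mat[OF K mult_carrier_mat[OF KD C] L] .
    also have "((K * D) * C) * L = (K * D) * (C * L)" using assoc_mult_mat[OF KD C L] .
    finally show ?thesis .
  qed
  finally have eq: "integral\<^sup>L M (\<lambda>\<omega>. sq_norm_vec (K *\<^sub>v x \<omega> - K *\<^sub>v (D *\<^sub>v y \<omega>))) =
     tr ((K * L - (K * D) * (C * L)) * transpose_mat (K * L - (K * D) * (C * L)))" .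
  have KL: "K * L \<in> carrier_mat mk n" using K L by auto
  have CL: "C * L \<in> carrier_mat r n" using C L by auto
  have "transpose_mat (K * L) * (K * L) = transpose_mat L * transpose_mat K * K * L"
  proof -
    have Lt: "transpose_mat L \<in> carrier_mat n n" using L by auto
    have Kt: "transpose_mat K \<in> carrier_mat n mk" using K by auto
    have "transpose_mat (K * L) * (K * L) = (transpose_mat L * transpose_mat K) * (K * L)"
      using transpose_mult[OF K L] by simp
    also have "\<dots> = ((transpose_mat L * transpose_mat K) * K) * L"
      using assoc_mult_mat[OF mult_carrier_mat[OF Lt Kt] K L] by simp
    finally show ?thesis .
  qed
  then have mu': "eigenvalues_desc (transpose_mat (K * L) * (K * L)) mu" using mu by simp
  show ?thesis unfolding eq by (rule eckart[OF KL KD CL mu'])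
qed

theorem mainTheorem2:
  fixes M :: "'w measure" and x :: "'w \<Rightarrow> real vec"
    and n a b Z m3 m4 :: nat
    and Psi L K3 K4 E13 E15 E24 E25 E56 D3 D4 :: "real mat"
    and mu3 mu4 :: "real list"
  assumes prob: "prob_space M"
    and dims: "0 < n" "0 < a" "0 < b" "0 < Z" "max a b \<le> n" "n \<le> a + b" "Z \<le> n"
    and x_dim: "\<And>\<omega>. \<omega> \<in> space M \<Longrightarrow> x \<omega> \<in> carrier_vec n"
    and x_meas: "\<And>i. i < n \<Longrightarrow> (\<lambda>\<omega>. x \<omega> $ i) \<in> borel_measurable M"
    and x_sq_int: "\<And>i j. i < n \<Longrightarrow> j < n \<Longrightarrow> integrable M (\<lambda>\<omega>. x \<omega> $ i * x \<omega> $ j)"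
    and x_mean: "\<And>i. i < n \<Longrightarrow> prob_space.expectation M (\<lambda>\<omega>. x \<omega> $ i) = 0"
    and Psi_dim: "Psi \<in> carrier_mat n n"
    and Psi_cov: "\<And>i j. i < n \<Longrightarrow> j < n \<Longrightarrow>
                    Psi $$ (i,j) = prob_space.expectation M (\<lambda>\<omega>. x \<omega> $ i * x \<omega> $ j)"
    and Psi_pd: "pos_def_mat Psi"
    and L_dim: "L \<in> carrier_mat n n"
    and L_chol: "lower_tri_pos_diag L" "Psi = L * transpose_mat L"
    and K3_dim: "K3 \<in> carrier_mat m3 n" and K4_dim: "K4 \<in> carrier_mat m4 n"
    and E_dims: "E13 \<in> carrier_mat Z a" "E15 \<in> carrier_mat Z a"
                "E24 \<in> carrier_mat Z b" "E25 \<in> carrier_mat Z b"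
                "E56 \<in> carrier_mat Z (2 * Z)"
    and D_dims: "D3 \<in> carrier_mat n (2 * Z)" "D4 \<in> carrier_mat n (2 * Z)"
    and mu3: "eigenvalues_desc (transpose_mat L * transpose_mat K3 * K3 * L) mu3"
    and mu4: "eigenvalues_desc (transpose_mat L * transpose_mat K4 * K4 * L) mu4"
  shows "prob_space.expectation M (\<lambda>\<omega>.
            sq_norm_vec (K3 *\<^sub>v x \<omega> - K3 *\<^sub>v (D3 *\<^sub>v
              ((E13 *\<^sub>v first_part a (x \<omega>)) @\<^sub>v
               phi56 E15 E25 E56 (first_part a (x \<omega>)) (last_part n b (x \<omega>))))))
       + prob_space.expectation M (\<lambda>\<omega>.
            sq_norm_vec (K4 *\<^sub>v x \<omega> - K4 *\<^sub>v (D4 *\<^sub>v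
              ((E24 *\<^sub>v last_part n b (x \<omega>)) @\<^sub>v
               phi56 E15 E25 E56 (first_part a (x \<omega>)) (last_part n b (x \<omega>))))))
       \<ge> sum_list (drop (2 * Z) mu3) + sum_list (drop (2 * Z) mu4)"

proof -
  have two: "2 * Z = Z + Z" by simp
  define P1 where "P1 = mat a n (\<lambda>(i,j). if i = j then 1 else (0::real))"
  define P2 where "P2 = mat b n (\<lambda>(i,j). if j = n - b + i then 1 else (0::real))"
  have P1: "P1 \<in> carrier_mat a n" unfolding P1_def by auto
  have P2: "P2 \<in> carrier_mat b n" unfolding P2_def by auto
  have fp: "first_part a v = P1 *\<^sub>v v" if v: "v \<in> carrier_vec n" for v
  proof (rule eq_vecI)
    fix i assume "i < dim_vec (P1 *\<^sub>v v)"
    then have i: "i < a" using P1 by auto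
    then have "i < n" using dims by auto
    then show "first_part a v $ i = (P1 *\<^sub>v v) $ i"
      using i v unfolding first_part_def P1_def
      by (auto simp: scalar_prod_def if_distrib[of "\<lambda>t. t * _"] sum.delta cong: if_cong)
  qed (use P1 in \<open>auto simp: first_part_def\<close>)
  have lp: "last_part n b v = P2 *\<^sub>v v" if v: "v \<in> carrier_vec n" for v
  proof (rule eq_vecI)
    fix i assume "i < dim_vec (P2 *\<^sub>v v)"
    then have i: "i < b" using P2 by auto
    then have "n - b + i < n" using dims by auto
    then show "last_part n b v $ i = (P2 *\<^sub>v v) $ i"
      using i v unfolding last_part_def P2_def
      by (auto simp: scalar_prod_def if_distrib[of "\<lambda>t. t * _"] sum.delta' cong: if_cong)
  qed (use P2 in \<open>auto simp: last_part_def\<close>)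
  have EP1: "E13 * P1 \<in> carrier_mat Z n" "E15 * P1 \<in> carrier_mat Z n" using E_dims P1 by auto
  have EP2: "E24 * P2 \<in> carrier_mat Z n" "E25 * P2 \<in> carrier_mat Z n" using E_dims P2 by auto
  define A5 where "A5 = (E15 * P1) @\<^sub>r (E25 * P2)"
  have A5: "A5 \<in> carrier_mat (Z + Z) n" unfolding A5_def using EP1 EP2 by auto
  have E56: "E56 \<in> carrier_mat Z (Z + Z)" using E_dims two by simp
  define Cm where "Cm = E56 * A5"
  have Cm: "Cm \<in> carrier_mat Z n" unfolding Cm_def using E56 A5 by auto
  define C3 where "C3 = (E13 * P1) @\<^sub>r Cm"
  define C4 where "C4 = (E24 * P2) @\<^sub>r Cm"
  have C3: "C3 \<in> carrier_mat (2 * Z) n" unfolding C3_def two using EP1 Cm by auto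
  have C4: "C4 \<in> carrier_mat (2 * Z) n" unfolding C4_def two using EP2 Cm by auto
  have phi: "phi56 E15 E25 E56 (first_part a v) (last_part n b v) = Cm *\<^sub>v v" if v: "v \<in> carrier_vec n" for v
  proof -
    have "(E15 *\<^sub>v first_part a v) @\<^sub>v (E25 *\<^sub>v last_part n b v) = ((E15 * P1) *\<^sub>v v) @\<^sub>v ((E25 * P2) *\<^sub>v v)"
      unfolding fp[OF v] lp[OF v] using E_dims P1 P2 v by simp
    also have "\<dots> = A5 *\<^sub>v v" unfolding A5_def by (rule mat_mult_append[symmetric, OF EP1(2) EP2(2) v])
    finally show ?thesis unfolding phi56_def Cm_def using E56 A5 v by simp
  qed
  have y3: "(E13 *\<^sub>v first_part a (x \<omega>)) @\<^sub>v phi56 E15 E25 E56 (first_part a (x \<omega>)) (last_part n b (x \<omega>))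
      = C3 *\<^sub>v x \<omega>" if w: "\<omega> \<in> space M" for \<omega>
  proof -
    have v: "x \<omega> \<in> carrier_vec n" using x_dim w .
    have "E13 *\<^sub>v first_part a (x \<omega>) = (E13 * P1) *\<^sub>v x \<omega>" unfolding fp[OF v] using E_dims P1 v by simp
    then show ?thesis unfolding phi[OF v] C3_def using mat_mult_append[OF EP1(1) Cm v] by simp
  qed
  have y4: "(E24 *\<^sub>v last_part n b (x \<omega>)) @\<^sub>v phi56 E15 E25 E56 (first_part a (x \<omega>)) (last_part n b (x \<omega>))
      = C4 *\<^sub>v x \<omega>" if w: "\<omega> \<in> space M" for \<omega>
  proof -
    have v: "x \<omega> \<in> carrier_vec n" using x_dim w .
    have "E24 *\<^sub>v last_part n b (x \<omega>) = (E24 * P2) *\<^sub>v x \<omega>" unfolding lp[OF v] using E_dims P2 v by simp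
    then show ?thesis unfolding phi[OF v] C4_def using mat_mult_append[OF EP2(1) Cm v] by simp
  qed
  have b3: "sum_list (drop (2 * Z) mu3) \<le> integral\<^sup>L M (\<lambda>\<omega>.
            sq_norm_vec (K3 *\<^sub>v x \<omega> - K3 *\<^sub>v (D3 *\<^sub>v
              ((E13 *\<^sub>v first_part a (x \<omega>)) @\<^sub>v
               phi56 E15 E25 E56 (first_part a (x \<omega>)) (last_part n b (x \<omega>))))))"
    by (rule task_bound[OF x_dim x_sq_int Psi_dim Psi_cov L_dim L_chol(2) K3_dim D_dims(1) C3 mu3 y3])
  have b4: "sum_list (drop (2 * Z) mu4) \<le> integral\<^sup>L M (\<lambda>\<omega>.
            sq_norm_vec (K4 *\<^sub>v x \<omega> - K4 *\<^sub>v (D4 *\<^sub>v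
              ((E24 *\<^sub>v last_part n b (x \<omega>)) @\<^sub>v
               phi56 E15 E25 E56 (first_part a (x \<omega>)) (last_part n b (x \<omega>))))))"
    by (rule task_bound[OF x_dim x_sq_int Psi_dim Psi_cov L_dim L_chol(2) K4_dim D_dims(2) C4 mu4 y4])
  show ?thesis using b3 b4 by simp
qed

end
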